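(* For all sufficiently large $n$, $$\tfrac12 \log_2 n \le h_3(n,\{(4,1),(4,3)\}) < 4(\log_2 n)^2.$$
   Context: For an $r$-uniform hypergraph ($r$-graph) $H$, a homogeneous set is a set of vertices that is either a clique (every $r$-subset is an edge) or a coclique (no $r$-subset is an edge); $h(H)$ denotes the size of a largest homogeneous set. An $(m,f)$-graph is an $r$-graph with $m$ vertices and $f$ edges; $H$ is $(m,f)$-free if it contains no induced sub-hypergraph that is an $(m,f)$-graph. For a set $Q$ of pairs $(m,f)$, $H$ is $Q$-free if it is $(m,f)$-free for every $(m,f)\in Q$. $h_r(n,Q)$ is the minimum of $h(H)$ over all $n$-vertex $Q$-free $r$-graphs $H$. *)

theory Defs
  imports Complex_Main
begin

definition uniform_hypergraph :: "nat \<Rightarrow> 'a set \<Rightarrow> 'a set set \<Rightarrow> bool" where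
  "uniform_hypergraph r V E \<longleftrightarrow> finite V \<and> (\<forall>e\<in>E. e \<subseteq> V \<and> card e = r)"

definition r_subsets :: "nat \<Rightarrow> 'a set \<Rightarrow> 'a set set" where
  "r_subsets r S = {e. e \<subseteq> S \<and> card e = r}"

definition homogeneous :: "nat \<Rightarrow> 'a set \<Rightarrow> 'a set set \<Rightarrow> 'a set \<Rightarrow> bool" where
  "homogeneous r V E S \<longleftrightarrow> S \<subseteq> V \<and>
     (r_subsets r S \<subseteq> E \<or> r_subsets r S \<inter> E = {})"

definition hom_number :: "nat \<Rightarrow> 'a set \<Rightarrow> 'a set set \<Rightarrow> nat" where
  "hom_number r V E = Max {card S | S. homogeneous r V E S}"

definition has_induced :: "nat \<Rightarrow> 'a set \<Rightarrow> 'a set set \<Rightarrow> nat \<times> nat \<Rightarrow> bool" where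
  "has_induced r V E mf \<longleftrightarrow>
     (\<exists>S. S \<subseteq> V \<and> card S = fst mf \<and> card {e \<in> E. e \<subseteq> S} = snd mf)"

definition Q_free :: "nat \<Rightarrow> 'a set \<Rightarrow> 'a set set \<Rightarrow> (nat \<times> nat) set \<Rightarrow> bool" where
  "Q_free r V E Q \<longleftrightarrow> (\<forall>mf\<in>Q. \<not> has_induced r V E mf)"

text \<open>h_r(n,Q): minimum of h(H) over all n-vertex Q-free r-graphs H.
  Up to isomorphism we may take the vertex set to be {0..<n}.\<close>
definition h_r :: "nat \<Rightarrow> nat \<Rightarrow> (nat \<times> nat) set \<Rightarrow> nat" where
  "h_r r n Q = Min {hom_number r {..<n} E | E.
       uniform_hypergraph r {..<n} E \<and> Q_free r {..<n} E Q}"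

end

theory Submission
  imports Defs
begin



lemma ramsey_aux:
  fixes g :: "'a \<Rightarrow> 'a \<Rightarrow> bool"
  assumes sym: "\<And>x y. g x y = g y x"
  shows "finite V \<Longrightarrow> 2^(a+b) \<le> card V \<Longrightarrow> \<exists>S\<subseteq>V. (card S = a \<and> (\<forall>x\<in>S. \<forall>y\<in>S. x\<noteq>y \<longrightarrow> g x y)) \<or> (card S = b \<and> (\<forall>x\<in>S. \<forall>y\<in>S. x\<noteq>y \<longrightarrow> \<not> g x y))"
proof (induction "a+b" arbitrary: a b V)
  case 0 then show ?case by (intro exI[of _ "{}"]) auto
next
  case (Suc s)
  show ?case
  proof (cases "a = 0 \<or> b = 0")
    case True then show ?thesis by (intro exI[of _ "{}"]) auto
  next
    case False
    then obtain a' b' where a: "a = Suc a'" and b: "b = Suc b'" by (meson not0_implies_Suc)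
    have "V \<noteq> {}" using Suc.prems by (cases "V = {}") auto
    then obtain v where v: "v \<in> V" by blast
    define N where "N = {x \<in> V - {v}. g v x}"
    define M where "M = {x \<in> V - {v}. \<not> g v x}"
    have fin: "finite N" "finite M" using Suc.prems(1) by (auto simp: N_def M_def)
    have "N \<union> M = V - {v}" "N \<inter> M = {}" by (auto simp: N_def M_def)
    hence "card N + card M = card V - 1"
      by (metis Suc.prems(1) card_Diff_singleton card_Un_disjoint fin v)
    hence cNM: "card N + card M + 1 \<ge> 2^(a+b)" using Suc.prems(2) by linarith
    have p: "(2::nat)^(a+b) = 2^(a'+b) + 2^(a+b')" using a b by simp
    show ?thesis
    proof (cases "2^(a'+b) \<le> card N")
      case True
      from Suc.hyps(1)[of a' b N] True fin a Suc.hyps(2)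
      obtain S where S: "S \<subseteq> N" "(card S = a' \<and> (\<forall>x\<in>S. \<forall>y\<in>S. x\<noteq>y \<longrightarrow> g x y)) \<or> (card S = b \<and> (\<forall>x\<in>S. \<forall>y\<in>S. x\<noteq>y \<longrightarrow> \<not> g x y))"
        by auto
      show ?thesis
      proof (cases "card S = a' \<and> (\<forall>x\<in>S. \<forall>y\<in>S. x\<noteq>y \<longrightarrow> g x y)")
        case True
        have "v \<notin> S" "finite S" using S(1) fin by (auto simp: N_def intro: finite_subset)
        hence "card (insert v S) = a" using True a by simp
        moreover have "insert v S \<subseteq> V" using S(1) v by (auto simp: N_def)
        moreover have "\<forall>x\<in>insert v S. \<forall>y\<in>insert v S. x\<noteq>y \<longrightarrow> g x y"
          using True S(1) sym by (auto simp: N_def)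
        ultimately show ?thesis by blast
      next
        case False
        with S have "card S = b \<and> (\<forall>x\<in>S. \<forall>y\<in>S. x\<noteq>y \<longrightarrow> \<not> g x y)" by blast
        moreover have "S \<subseteq> V" using S(1) by (auto simp: N_def)
        ultimately show ?thesis by blast
      qed
    next
      case False
      hence M2: "2^(a+b') \<le> card M" using cNM p by linarith
      from Suc.hyps(1)[of a b' M] M2 fin b Suc.hyps(2)
      obtain S where S: "S \<subseteq> M" "(card S = a \<and> (\<forall>x\<in>S. \<forall>y\<in>S. x\<noteq>y \<longrightarrow> g x y)) \<or> (card S = b' \<and> (\<forall>x\<in>S. \<forall>y\<in>S. x\<noteq>y \<longrightarrow> \<not> g x y))"
        by auto
      show ?thesis
      proof (cases "card S = b' \<and> (\<forall>x\<in>S. \<forall>y\<in>S. x\<noteq>y \<longrightarrow> \<not> g x y)")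
        case True
        have "v \<notin> S" "finite S" using S(1) fin by (auto simp: M_def intro: finite_subset)
        hence "card (insert v S) = b" using True b by simp
        moreover have "insert v S \<subseteq> V" using S(1) v by (auto simp: M_def)
        moreover have "\<forall>x\<in>insert v S. \<forall>y\<in>insert v S. x\<noteq>y \<longrightarrow> \<not> g x y"
          using True S(1) sym by (auto simp: M_def)
        ultimately show ?thesis by blast
      next
        case False
        with S have "card S = a \<and> (\<forall>x\<in>S. \<forall>y\<in>S. x\<noteq>y \<longrightarrow> g x y)" by blast
        moreover have "S \<subseteq> V" using S(1) by (auto simp: M_def)
        ultimately show ?thesis by blast
      qed
    qed
  qed
qed




lemma four_sub:
  assumes d: "distinct [a,b,c,d]" and e: "e \<subseteq> {a,b,c,d}" "card e = 3"
  shows "e \<in> set [{a,b,c},{a,b,d},{a,c,d},{b,c,d}]"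
proof -
  have c4: "card {a,b,c,d} = 4" using d by simp
  have fe: "finite e" using e(2) card.infinite by fastforce
  have "card ({a,b,c,d} - e) = 1" using e c4 by (simp add: card_Diff_subset fe)
  then obtain w where w: "{a,b,c,d} - e = {w}" by (meson card_1_singletonE)
  hence "e = {a,b,c,d} - {w}" "w \<in> {a,b,c,d}" using e(1) by auto
  thus ?thesis using d by auto
qed

lemma edges4:
  assumes u: "uniform_hypergraph 3 V E" and d: "distinct [a,b,c,d]"
  shows "card {x \<in> E. x \<subseteq> {a,b,c,d}} = length (filter (\<lambda>x. x \<in> E) [{a,b,c},{a,b,d},{a,c,d},{b,c,d}])"
proof -
  let ?L = "[{a,b,c},{a,b,d},{a,c,d},{b,c,d}]"
  have eq: "{x \<in> E. x \<subseteq> {a,b,c,d}} = set (filter (\<lambda>x. x \<in> E) ?L)"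
  proof
    show "{x \<in> E. x \<subseteq> {a,b,c,d}} \<subseteq> set (filter (\<lambda>x. x \<in> E) ?L)"
    proof
      fix x assume "x \<in> {x \<in> E. x \<subseteq> {a,b,c,d}}"
      hence xE: "x \<in> E" and xs: "x \<subseteq> {a,b,c,d}" and c3: "card x = 3" using u by (auto simp: uniform_hypergraph_def)
      have "x \<in> set ?L" by (rule four_sub[OF d xs c3])
      thus "x \<in> set (filter (\<lambda>x. x \<in> E) ?L)"
        using \<open>x \<in> E\<close> unfolding set_filter by (intro CollectI conjI)
    qed
    show "set (filter (\<lambda>x. x \<in> E) ?L) \<subseteq> {x \<in> E. x \<subseteq> {a,b,c,d}}"
      unfolding set_filter by auto
  qed
  have "distinct ?L" using d by auto
  hence dist: "distinct (filter (\<lambda>x. x \<in> E) ?L)" by (rule distinct_filter)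
  show ?thesis unfolding eq by (rule distinct_card[OF dist])
qed



lemma hom_finite2: fixes n :: nat shows "finite {card S | S. homogeneous r {..<n} E S}"
proof -
  have "{card S | S. homogeneous r {..<n} E S} \<subseteq> {..n}"
    by (auto simp: homogeneous_def dest!: card_mono[OF finite_lessThan[of n]])
  thus ?thesis using finite_subset by blast
qed

lemma hom_ge: fixes n :: nat shows "homogeneous r {..<n} E S \<Longrightarrow> card S \<le> hom_number r {..<n} E"
  unfolding hom_number_def using hom_finite2 by (intro Max_ge) auto

lemma tri0:
  assumes "(0::nat) \<in> {p,q,r}" "distinct [p,q,r]"
  shows "\<exists>x y. {p,q,r} = {0,x,y} \<and> x \<noteq> y \<and> x \<in> {p,q,r} \<and> y \<in> {p,q,r} \<and> x \<noteq> 0 \<and> y \<noteq> 0"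
proof -
  consider "p = 0" | "q = 0" | "r = 0" using assms(1) by blast
  thus ?thesis
  proof cases
    case 1 thus ?thesis using assms(2) by (intro exI[of _ q] exI[of _ r]) auto
  next
    case 2 thus ?thesis using assms(2) by (intro exI[of _ p] exI[of _ r]) auto
  next
    case 3 thus ?thesis using assms(2) by (intro exI[of _ p] exI[of _ q]) auto
  qed
qed

lemma lower:
  fixes n k :: nat and E :: "nat set set"
  assumes u: "uniform_hypergraph 3 {..<n} E" and q: "Q_free 3 {..<n} E {(4,1),(4,3)}"
    and n: "1 \<le> n" and k: "4^k \<le> n - 1"
  shows "k+1 \<le> hom_number 3 {..<n} E"
proof -
  define g where "g x y = ({0,x,y} \<in> E)" for x y :: nat
  have sym: "\<And>x y. g x y = g y x" by (simp add: g_def insert_commute)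
  have "(2::nat)^(k+k) = 4^k" by (simp add: power_add[symmetric] mult_2[symmetric] power_mult)
  hence "2^(k+k) \<le> card {1..<n}" using k by simp
  from ramsey_aux[where g=g and V="{1..<n}" and a=k and b=k, OF sym _ this]
  obtain S where S: "S \<subseteq> {1..<n}" "(card S = k \<and> (\<forall>x\<in>S. \<forall>y\<in>S. x\<noteq>y \<longrightarrow> g x y)) \<or> (card S = k \<and> (\<forall>x\<in>S. \<forall>y\<in>S. x\<noteq>y \<longrightarrow> \<not> g x y))"
    by auto
  have no41: "\<not> has_induced 3 {..<n} E (4,1)" and no43: "\<not> has_induced 3 {..<n} E (4,3)"
    using q by (auto simp: Q_free_def)
  have S0: "0 \<notin> S" "finite S" using S(1) by (auto intro: finite_subset)
  have Sn: "insert 0 S \<subseteq> {..<n}" using S(1) n by auto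
  have cardS: "card (insert 0 S) = k + 1" using S S0 by auto
  show ?thesis
  proof (cases "\<forall>x\<in>S. \<forall>y\<in>S. x\<noteq>y \<longrightarrow> g x y")
    case True
    have trip: "{x,y,z} \<in> E" if "x\<in>S" "y\<in>S" "z\<in>S" "distinct [x,y,z]" for x y z
    proof (rule ccontr)
      assume nE: "{x,y,z} \<notin> E"
      have nz: "0 \<notin> {x,y,z}" using that S0 by blast
      have d: "distinct [0,x,y,z]" using that nz by simp
      have "{0,x,y} \<in> E" "{0,x,z} \<in> E" "{0,y,z} \<in> E" using True that by (auto simp: g_def)
      hence "card {e \<in> E. e \<subseteq> {0,x,y,z}} = 3" using edges4[OF u d] nE by simp
      moreover have "{0,x,y,z} \<subseteq> {..<n}" "card {0,x,y,z} = 4" using Sn that d by auto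
      ultimately have "has_induced 3 {..<n} E (4,3)" unfolding has_induced_def by (intro exI[of _ "{0,x,y,z}"]) simp
      thus False using no43 by blast
    qed
    have "homogeneous 3 {..<n} E (insert 0 S)"
      unfolding homogeneous_def
    proof (intro conjI disjI1 Sn subsetI)
      fix t assume "t \<in> r_subsets 3 (insert 0 S)"
      then obtain p q r where t: "t = {p,q,r}" "distinct [p,q,r]" "{p,q,r} \<subseteq> insert 0 S"
        by (auto simp: r_subsets_def card_3_iff)
      show "t \<in> E"
      proof (cases "0 \<in> t")
        case False thus ?thesis using t trip by auto
      next
        case True
        then obtain x y where xy: "t = {0,x,y}" "x \<noteq> y" "x \<in> t" "y \<in> t" "x \<noteq> 0" "y \<noteq> 0"
          using tri0[of p q r] t by metis
        hence "x \<in> S" "y \<in> S" using t by auto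
        hence "g x y" using \<open>\<forall>x\<in>S. \<forall>y\<in>S. x\<noteq>y \<longrightarrow> g x y\<close> xy(2) by blast
        thus ?thesis using xy by (simp add: g_def)
      qed
    qed
    from hom_ge[OF this] show ?thesis using cardS by simp
  next
    case False
    hence Fa: "\<forall>x\<in>S. \<forall>y\<in>S. x\<noteq>y \<longrightarrow> \<not> g x y" using S by blast
    have trip: "{x,y,z} \<notin> E" if "x\<in>S" "y\<in>S" "z\<in>S" "distinct [x,y,z]" for x y z
    proof
      assume nE: "{x,y,z} \<in> E"
      have nz: "0 \<notin> {x,y,z}" using that S0 by blast
      have d: "distinct [0,x,y,z]" using that nz by simp
      have "{0,x,y} \<notin> E" "{0,x,z} \<notin> E" "{0,y,z} \<notin> E" using Fa that by (auto simp: g_def)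
      hence "card {e \<in> E. e \<subseteq> {0,x,y,z}} = 1" using edges4[OF u d] nE by simp
      moreover have "{0,x,y,z} \<subseteq> {..<n}" "card {0,x,y,z} = 4" using Sn that d by auto
      ultimately have "has_induced 3 {..<n} E (4,1)" unfolding has_induced_def by (intro exI[of _ "{0,x,y,z}"]) simp
      thus False using no41 by blast
    qed
    have "homogeneous 3 {..<n} E (insert 0 S)"
      unfolding homogeneous_def
    proof (intro conjI disjI2 Sn)
      show "r_subsets 3 (insert 0 S) \<inter> E = {}"
      proof (rule ccontr)
        assume "r_subsets 3 (insert 0 S) \<inter> E \<noteq> {}"
        then obtain t where tE: "t \<in> E" "t \<in> r_subsets 3 (insert 0 S)" by blast
        then obtain p q r where t: "t = {p,q,r}" "distinct [p,q,r]" "{p,q,r} \<subseteq> insert 0 S"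
          by (auto simp: r_subsets_def card_3_iff)
        show False
        proof (cases "0 \<in> t")
          case False thus ?thesis using t trip tE by auto
        next
          case True
          then obtain x y where xy: "t = {0,x,y}" "x \<noteq> y" "x \<in> t" "y \<in> t" "x \<noteq> 0" "y \<noteq> 0"
            using tri0[of p q r] t by metis
          hence "x \<in> S" "y \<in> S" using t by auto
          thus ?thesis using Fa xy tE by (simp add: g_def)
        qed
      qed
    qed
    from hom_ge[OF this] show ?thesis using cardS by simp
  qed
qed




lemma three_sub:
  assumes d: "distinct [a,b,c]" and e: "e \<subseteq> {a,b,c}" "card e = 2"
  shows "e \<in> set [{a,b},{a,c},{b,c}]"
proof -
  have c4: "card {a,b,c} = 3" using d by simp
  have fe: "finite e" using e(2) card.infinite by fastforce
  have "card ({a,b,c} - e) = 1" using e c4 by (simp add: card_Diff_subset fe)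
  then obtain w where w: "{a,b,c} - e = {w}" by (meson card_1_singletonE)
  hence "e = {a,b,c} - {w}" "w \<in> {a,b,c}" using e(1) by auto
  thus ?thesis using d by auto
qed

lemma pairs3:
  assumes u: "\<forall>p\<in>G. card p = 2" and d: "distinct [a,b,c]"
  shows "card {x \<in> G. x \<subseteq> {a,b,c}} = length (filter (\<lambda>x. x \<in> G) [{a,b},{a,c},{b,c}])"
proof -
  let ?L = "[{a,b},{a,c},{b,c}]"
  have eq: "{x \<in> G. x \<subseteq> {a,b,c}} = set (filter (\<lambda>x. x \<in> G) ?L)"
  proof
    show "{x \<in> G. x \<subseteq> {a,b,c}} \<subseteq> set (filter (\<lambda>x. x \<in> G) ?L)"
    proof
      fix x assume "x \<in> {x \<in> G. x \<subseteq> {a,b,c}}"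
      hence xE: "x \<in> G" and xs: "x \<subseteq> {a,b,c}" and c3: "card x = 2" using u by auto
      have "x \<in> set ?L" by (rule three_sub[OF d xs c3])
      thus "x \<in> set (filter (\<lambda>x. x \<in> G) ?L)"
        using xE unfolding set_filter by (intro CollectI conjI)
    qed
    show "set (filter (\<lambda>x. x \<in> G) ?L) \<subseteq> {x \<in> G. x \<subseteq> {a,b,c}}"
      unfolding set_filter by auto
  qed
  have "distinct ?L" using d by auto
  hence dist: "distinct (filter (\<lambda>x. x \<in> G) ?L)" by (rule distinct_filter)
  show ?thesis unfolding eq by (rule distinct_card[OF dist])
qed

definition EG :: "nat \<Rightarrow> nat set set \<Rightarrow> nat set set" where
  "EG n G = {t \<in> r_subsets 3 {..<n}. odd (card {p \<in> G. p \<subseteq> t})}"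

lemma EG_uniform: "uniform_hypergraph 3 {..<n} (EG n G)"
  by (auto simp: uniform_hypergraph_def EG_def r_subsets_def)

lemma EG_mem:
  assumes u: "\<forall>p\<in>G. card p = 2" and d: "distinct [a,b,c]" and n: "a < n" "b < n" "c < n"
  shows "({a,b,c} \<in> EG n G) = (({a,b}\<in>G) \<noteq> (({a,c}\<in>G) \<noteq> ({b,c}\<in>G)))"
proof -
  have "{a,b,c} \<in> r_subsets 3 {..<n}" using d n by (simp add: r_subsets_def)
  hence "({a,b,c} \<in> EG n G) = odd (length (filter (\<lambda>x. x \<in> G) [{a,b},{a,c},{b,c}]))"
    unfolding EG_def using pairs3[OF u d] by simp
  thus ?thesis by (cases "{a,b}\<in>G"; cases "{a,c}\<in>G"; cases "{b,c}\<in>G") simp_all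
qed

lemma card4:
  assumes "card F = 4"
  obtains a b c d where "F = {a,b,c,d}" "distinct [a,b,c,d]"
proof -
  have "card F = Suc 3" using assms by simp
  then obtain a B where B: "F = insert a B" "a \<notin> B" "card B = 3"
    unfolding card_Suc_eq by blast
  then obtain b c d where "B = {b,c,d}" "b \<noteq> c" "c \<noteq> d" "b \<noteq> d" unfolding card_3_iff by blast
  thus ?thesis using B that by auto
qed

lemma EG_Qfree:
  assumes u: "\<forall>p\<in>G. card p = 2"
  shows "Q_free 3 {..<n} (EG n G) {(4,1),(4,3)}"
  unfolding Q_free_def has_induced_def
proof (intro ballI notI)
  fix mf assume mf: "mf \<in> {(4::nat,1::nat),(4,3)}"
  assume "\<exists>S. S \<subseteq> {..<n} \<and> card S = fst mf \<and> card {e \<in> EG n G. e \<subseteq> S} = snd mf"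
  then obtain F where F: "F \<subseteq> {..<n}" "card F = 4" "card {e \<in> EG n G. e \<subseteq> F} = snd mf"
    using mf by auto
  obtain a b c d where abcd: "F = {a,b,c,d}" "distinct [a,b,c,d]" using card4[OF F(2)] by blast
  have lt: "a < n" "b < n" "c < n" "d < n" using F(1) abcd(1) by auto
  have e1: "({a,b,c} \<in> EG n G) = (({a,b}\<in>G) \<noteq> (({a,c}\<in>G) \<noteq> ({b,c}\<in>G)))"
    using EG_mem[OF u _ lt(1,2,3)] abcd(2) by simp
  have e2: "({a,b,d} \<in> EG n G) = (({a,b}\<in>G) \<noteq> (({a,d}\<in>G) \<noteq> ({b,d}\<in>G)))"
    using EG_mem[OF u _ lt(1,2,4)] abcd(2) by simp
  have e3: "({a,c,d} \<in> EG n G) = (({a,c}\<in>G) \<noteq> (({a,d}\<in>G) \<noteq> ({c,d}\<in>G)))"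
    using EG_mem[OF u _ lt(1,3,4)] abcd(2) by simp
  have e4: "({b,c,d} \<in> EG n G) = (({b,c}\<in>G) \<noteq> (({b,d}\<in>G) \<noteq> ({c,d}\<in>G)))"
    using EG_mem[OF u _ lt(2,3,4)] abcd(2) by simp
  have cnt: "card {e \<in> EG n G. e \<subseteq> F} = length (filter (\<lambda>x. x \<in> EG n G) [{a,b,c},{a,b,d},{a,c,d},{b,c,d}])"
    unfolding abcd(1) by (rule edges4[OF EG_uniform abcd(2)])
  have "length (filter (\<lambda>x. x \<in> EG n G) [{a,b,c},{a,b,d},{a,c,d},{b,c,d}]) \<noteq> 1 \<and>
        length (filter (\<lambda>x. x \<in> EG n G) [{a,b,c},{a,b,d},{a,c,d},{b,c,d}]) \<noteq> 3"
    by (cases "{a,b}\<in>G"; cases "{a,c}\<in>G"; cases "{b,c}\<in>G"; cases "{a,d}\<in>G"; cases "{b,d}\<in>G"; cases "{c,d}\<in>G")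
       (simp_all only: e1 e2 e3 e4 filter.simps list.size if_True if_False, simp_all)
  thus False using F(3) cnt mf by auto
qed




definition pat :: "nat set \<Rightarrow> nat set \<Rightarrow> bool \<Rightarrow> nat set set" where
  "pat S' T c = {p \<in> r_subsets 2 S'. \<exists>x y. p = {x,y} \<and> ((x\<in>T) = (y\<in>T)) = c}"

lemma hom_subset:
  "homogeneous r V E S \<Longrightarrow> S0 \<subseteq> S \<Longrightarrow> homogeneous r V E S0"
  unfolding homogeneous_def r_subsets_def by blast

lemma hom_pat:
  assumes u: "\<forall>p\<in>G. card p = 2" and hom: "homogeneous 3 {..<n} (EG n G) S0"
    and ne: "S0 \<noteq> {}"
  shows "\<exists>T\<in>Pow S0. \<exists>c. G \<inter> r_subsets 2 (S0 - {Min S0}) = pat (S0 - {Min S0}) T c"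
proof -
  define v where "v = Min S0"
  define S' where "S' = S0 - {v}"
  have sub: "S0 \<subseteq> {..<n}" using hom by (simp add: homogeneous_def)
  hence fin: "finite S0" using finite_subset by blast
  have v: "v \<in> S0" unfolding v_def using fin ne by simp
  define T where "T = {x \<in> S'. {v,x} \<in> G}"
  have TS: "T \<in> Pow S0" unfolding T_def S'_def by auto
  have trip: "{v,x,y} \<in> r_subsets 3 S0" "distinct [v,x,y]" "v < n" "x < n" "y < n"
    if "x \<in> S'" "y \<in> S'" "x \<noteq> y" for x y
    using that v sub by (auto simp: S'_def r_subsets_def)
  have key: "\<exists>c. \<forall>x\<in>S'. \<forall>y\<in>S'. x\<noteq>y \<longrightarrow> ({x,y}\<in>G \<longleftrightarrow> (((x\<in>T) = (y\<in>T)) = c))"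
  proof (cases "r_subsets 3 S0 \<subseteq> EG n G")
    case True
    show ?thesis
    proof (intro exI[of _ True] ballI impI)
      fix x y assume xy: "x \<in> S'" "y \<in> S'" "x \<noteq> y"
      have "{v,x,y} \<in> EG n G" using True trip[OF xy] by blast
      hence "({v,x}\<in>G) \<noteq> (({v,y}\<in>G) \<noteq> ({x,y}\<in>G))"
        using EG_mem[OF u trip(2-5)[OF xy]] by simp
      moreover have "(x\<in>T) = ({v,x}\<in>G)" "(y\<in>T) = ({v,y}\<in>G)" using xy by (auto simp: T_def)
      ultimately show "{x,y}\<in>G \<longleftrightarrow> (((x\<in>T) = (y\<in>T)) = True)" by auto
    qed
  next
    case False
    hence F: "r_subsets 3 S0 \<inter> EG n G = {}" using hom by (simp add: homogeneous_def)
    show ?thesis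
    proof (intro exI[of _ False] ballI impI)
      fix x y assume xy: "x \<in> S'" "y \<in> S'" "x \<noteq> y"
      have "{v,x,y} \<notin> EG n G" using F trip[OF xy] by blast
      hence "\<not> (({v,x}\<in>G) \<noteq> (({v,y}\<in>G) \<noteq> ({x,y}\<in>G)))"
        using EG_mem[OF u trip(2-5)[OF xy]] by simp
      moreover have "(x\<in>T) = ({v,x}\<in>G)" "(y\<in>T) = ({v,y}\<in>G)" using xy by (auto simp: T_def)
      ultimately show "{x,y}\<in>G \<longleftrightarrow> (((x\<in>T) = (y\<in>T)) = False)" by auto
    qed
  qed
  then obtain c where c: "\<forall>x\<in>S'. \<forall>y\<in>S'. x\<noteq>y \<longrightarrow> ({x,y}\<in>G \<longleftrightarrow> (((x\<in>T) = (y\<in>T)) = c))"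
    by blast
  have "G \<inter> r_subsets 2 S' = pat S' T c"
  proof
    show "G \<inter> r_subsets 2 S' \<subseteq> pat S' T c"
    proof
      fix p assume p: "p \<in> G \<inter> r_subsets 2 S'"
      then obtain x y where xy: "p = {x,y}" "x \<noteq> y" by (auto simp: r_subsets_def card_2_iff)
      hence "x \<in> S'" "y \<in> S'" using p by (auto simp: r_subsets_def)
      hence "((x\<in>T) = (y\<in>T)) = c" using c xy p by blast
      thus "p \<in> pat S' T c" using p xy unfolding pat_def by blast
    qed
    show "pat S' T c \<subseteq> G \<inter> r_subsets 2 S'"
    proof
      fix p assume p: "p \<in> pat S' T c"
      then obtain x y where xy: "p = {x,y}" "((x\<in>T) = (y\<in>T)) = c" and pr: "p \<in> r_subsets 2 S'"
        unfolding pat_def by blast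
      have "x \<noteq> y" using pr xy(1) by (auto simp: r_subsets_def)
      moreover have "x \<in> S'" "y \<in> S'" using pr xy(1) by (auto simp: r_subsets_def)
      ultimately have "p \<in> G" using c xy by blast
      thus "p \<in> G \<inter> r_subsets 2 S'" using pr by blast
    qed
  qed
  thus ?thesis using TS unfolding S'_def v_def by blast
qed

lemma count_fix:
  assumes A: "finite A" and P: "P \<subseteq> A"
  shows "card {G \<in> Pow A. G \<inter> P = X} \<le> 2^(card A - card P)"
proof -
  have "card {G \<in> Pow A. G \<inter> P = X} \<le> card (Pow (A - P))"
  proof (rule card_inj_on_le[of "\<lambda>G. G - P"])
    show "inj_on (\<lambda>G. G - P) {G \<in> Pow A. G \<inter> P = X}"
    proof (rule inj_onI)
      fix G1 G2 assume "G1 \<in> {G \<in> Pow A. G \<inter> P = X}" "G2 \<in> {G \<in> Pow A. G \<inter> P = X}" "G1 - P = G2 - P"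
      thus "G1 = G2" by blast
    qed
  qed (use A in auto)
  also have "\<dots> = 2^(card A - card P)"
    using A P by (simp add: card_Pow card_Diff_subset finite_subset)
  finally show ?thesis .
qed




lemma hom_attained:
  fixes n :: nat
  shows "\<exists>S. homogeneous r {..<n} E S \<and> card S = hom_number r {..<n} E"
proof -
  have "homogeneous r {..<n} E {}" unfolding homogeneous_def r_subsets_def by auto
  hence ne: "{card S | S. homogeneous r {..<n} E S} \<noteq> {}" by blast
  have "hom_number r {..<n} E \<in> {card S | S. homogeneous r {..<n} E S}"
    unfolding hom_number_def using hom_finite2 ne by (rule Max_in)
  then obtain S where "hom_number r {..<n} E = card S" "homogeneous r {..<n} E S" by blast
  thus ?thesis by metis
qed

lemma num_ineq:
  fixes n L :: nat assumes nL: "n \<le> 2^L"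
  shows "(n choose (2*L+6)) * 2^(2*L+6+1) < 2^((2*L+6-1) choose 2)"
proof (cases "2*L+6 \<le> n")
  case False thus ?thesis by (simp add: binomial_eq_0)
next
  case True
  have "(n choose (2*L+6)) \<le> n^(2*L+6)" by (rule binomial_le_pow[OF True])
  also have "\<dots> \<le> (2^L)^(2*L+6)" using nL by (rule power_mono) simp
  also have "\<dots> = 2^(L*(2*L+6))" by (simp add: power_mult)
  finally have "(n choose (2*L+6)) * 2^(2*L+6+1) \<le> 2^(L*(2*L+6)) * 2^(2*L+6+1)" by simp
  also have "\<dots> = 2^(L*(2*L+6) + (2*L+6+1))" by (simp add: power_add)
  also have "\<dots> < 2^((2*L+6-1) choose 2)"
  proof (rule power_strict_increasing)
    have e5: "2*L+6-1 = 2*L+5" by simp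
    have "(2*L+6-1) choose 2 = (2*L+5) choose 2" unfolding e5 by (rule refl)
    also have "\<dots> = (2*L+5)*(2*L+5-1) div 2" by (rule choose_two)
    also have "(2*L+5-1) = 2*L+4" by simp
    finally have "(2*L+6-1) choose 2 = (2*L+5)*(2*L+4) div 2" .
    also have "(2*L+5)*(2*L+4) = 2*((2*L+5)*(L+2))" by (simp add: algebra_simps)
    finally have "(2*L+6-1) choose 2 = (2*L+5)*(L+2)" by simp
    thus "L*(2*L+6) + (2*L+6+1) < (2*L+6-1) choose 2" by (simp add: algebra_simps)
  qed simp
  finally show ?thesis .
qed

lemma upper_graph:
  fixes n L :: nat assumes nL: "n \<le> 2^L"
  shows "\<exists>G. G \<subseteq> r_subsets 2 {..<n} \<and> hom_number 3 {..<n} (EG n G) \<le> 2*L+5"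
proof -
  define K where "K = 2*L+6"
  define A where "A = r_subsets 2 {..<(n::nat)}"
  define N where "N = card A"
  define m where "m = (K-1) choose 2"
  have finA: "finite A" unfolding A_def r_subsets_def by (rule finite_subset[of _ "Pow {..<n}"]) auto
  have cardA: "N = n choose 2" unfolding N_def A_def r_subsets_def by (simp add: n_subsets)
  define B where "B S0 T c = {G \<in> Pow A. G \<inter> r_subsets 2 (S0 - {Min S0}) = pat (S0 - {Min S0}) T c}"
    for S0 T c
  define Bad where "Bad = {G \<in> Pow A. \<exists>S. homogeneous 3 {..<n} (EG n G) S \<and> K \<le> card S}"
  define U where "U = (\<Union>S0\<in>r_subsets K {..<n}. \<Union>T\<in>Pow S0. \<Union>c\<in>(UNIV::bool set). B S0 T c)"
  have BadU: "Bad \<subseteq> U"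
  proof
    fix G assume "G \<in> Bad"
    then obtain S where GA: "G \<in> Pow A" and S: "homogeneous 3 {..<n} (EG n G) S" "K \<le> card S"
      unfolding Bad_def by blast
    obtain S0 where S0: "S0 \<subseteq> S" "card S0 = K" "finite S0" using obtain_subset_with_card_n[OF S(2)] by blast
    have h0: "homogeneous 3 {..<n} (EG n G) S0" using hom_subset[OF S(1) S0(1)] .
    have ne: "S0 \<noteq> {}" using S0(2) K_def by auto
    have u: "\<forall>p\<in>G. card p = 2" using GA unfolding A_def r_subsets_def by blast
    obtain T c where T: "T \<in> Pow S0" "G \<inter> r_subsets 2 (S0 - {Min S0}) = pat (S0 - {Min S0}) T c"
      using hom_pat[OF u h0 ne] by blast
    have "S0 \<subseteq> {..<n}" using h0 unfolding homogeneous_def by blast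
    hence "S0 \<in> r_subsets K {..<n}" using S0(2) unfolding r_subsets_def by blast
    thus "G \<in> U" unfolding U_def B_def using T GA by blast
  qed
  have Bbound: "card (B S0 T c) \<le> 2^(N-m)" if "S0 \<in> r_subsets K {..<n}" for S0 T c
  proof -
    have S0: "S0 \<subseteq> {..<n}" "card S0 = K" using that by (auto simp: r_subsets_def)
    have fin: "finite S0" using S0(1) finite_subset by blast
    have ne: "S0 \<noteq> {}" using S0(2) K_def by auto
    have "Min S0 \<in> S0" using fin ne by simp
    hence c1: "card (S0 - {Min S0}) = K - 1" using S0(2) fin by simp
    have P: "r_subsets 2 (S0 - {Min S0}) \<subseteq> A" using S0(1) by (auto simp: A_def r_subsets_def)
    have "card (r_subsets 2 (S0 - {Min S0})) = m" unfolding r_subsets_def m_def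
      using c1 fin by (simp add: n_subsets)
    thus ?thesis using count_fix[OF finA P] unfolding B_def N_def by simp
  qed
  have finR: "finite (r_subsets K {..<n})" unfolding r_subsets_def
    by (rule finite_subset[of _ "Pow {..<n}"]) auto
  have "card U \<le> (\<Sum>S0\<in>r_subsets K {..<n}. card (\<Union>T\<in>Pow S0. \<Union>c\<in>(UNIV::bool set). B S0 T c))"
    unfolding U_def by (rule card_UN_le[OF finR])
  also have "\<dots> \<le> (\<Sum>S0\<in>r_subsets K {..<n}. 2^K * (2 * 2^(N-m)))"
  proof (rule sum_mono)
    fix S0 assume S0R: "S0 \<in> r_subsets K {..<n}"
    have fin: "finite S0" "card S0 = K" using S0R finite_subset by (auto simp: r_subsets_def)
    have "card (\<Union>T\<in>Pow S0. \<Union>c\<in>(UNIV::bool set). B S0 T c) \<le> (\<Sum>T\<in>Pow S0. card (\<Union>c\<in>(UNIV::bool set). B S0 T c))"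
      by (rule card_UN_le) (simp add: fin)
    also have "\<dots> \<le> (\<Sum>T\<in>Pow S0. 2 * 2^(N-m))"
    proof (rule sum_mono)
      fix T
      have "card (\<Union>c\<in>(UNIV::bool set). B S0 T c) \<le> (\<Sum>c\<in>(UNIV::bool set). card (B S0 T c))"
        by (rule card_UN_le) simp
      also have "\<dots> \<le> (\<Sum>c\<in>(UNIV::bool set). 2^(N-m))"
        by (rule sum_mono) (rule Bbound[OF S0R])
      also have "\<dots> = 2 * 2^(N-m)" by simp
      finally show "card (\<Union>c\<in>(UNIV::bool set). B S0 T c) \<le> 2 * 2^(N-m)" .
    qed
    also have "\<dots> = 2^K * (2 * 2^(N-m))" using fin by (simp add: card_Pow)
    finally show "card (\<Union>T\<in>Pow S0. \<Union>c\<in>(UNIV::bool set). B S0 T c) \<le> 2^K * (2 * 2^(N-m))" .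
  qed
  also have "\<dots> = (n choose K) * (2^K * (2 * 2^(N-m)))"
    by (simp add: r_subsets_def n_subsets)
  also have "\<dots> < 2^N"
  proof (cases "K \<le> n")
    case False thus ?thesis by (simp add: binomial_eq_0)
  next
    case True
    have "{..<K} \<in> r_subsets K {..<n}" using True by (auto simp: r_subsets_def)
    have "r_subsets 2 ({..<K} - {Min {..<K}}) \<subseteq> A" using True by (auto simp: A_def r_subsets_def)
    hence "card (r_subsets 2 ({..<K} - {Min {..<K}})) \<le> N" unfolding N_def using finA by (rule card_mono[rotated])
    moreover have "card (r_subsets 2 ({..<K} - {Min {..<K}})) = m"
    proof -
      have "Min {..<K} \<in> {..<K}" proof (rule Min_in)
        show "{..<K} \<noteq> {}" proof -
          have "0 \<in> {..<K}" unfolding K_def by simp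
          thus ?thesis by blast
        qed
      qed simp
      hence "card ({..<K} - {Min {..<K}}) = K - 1" by simp
      thus ?thesis unfolding r_subsets_def m_def by (simp add: n_subsets)
    qed
    ultimately have mN: "m \<le> N" by simp
    have "(n choose K) * 2^(K+1) < 2^m" using num_ineq[OF nL] unfolding K_def m_def .
    hence "(n choose K) * 2^(K+1) * 2^(N-m) < 2^m * 2^(N-m)" by simp
    also have "2^m * 2^(N-m) = (2::nat)^(m + (N-m))" by (rule power_add[symmetric])
    also have "m + (N-m) = N" using mN by simp
    finally show ?thesis by (simp add: power_add algebra_simps)
  qed
  finally have "card U < 2^N" .
  moreover have "card (Pow A) = 2^N" using finA by (simp add: card_Pow N_def)
  ultimately have UA: "card U < card (Pow A)" by simp
  have "U \<subseteq> Pow A" unfolding U_def B_def by blast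
  hence "finite U" by (rule finite_subset) (simp add: finA)
  hence "card Bad \<le> card U" using BadU by (rule card_mono)
  hence lt: "card Bad < card (Pow A)" using UA by linarith
  have "\<not> Pow A \<subseteq> Bad"
  proof
    assume "Pow A \<subseteq> Bad"
    have "Bad \<subseteq> Pow A" unfolding Bad_def by blast
    hence "finite Bad" by (rule finite_subset) (simp add: finA)
    hence "card (Pow A) \<le> card Bad" using \<open>Pow A \<subseteq> Bad\<close> by (rule card_mono)
    thus False using lt by linarith
  qed
  then obtain G where G: "G \<in> Pow A" "G \<notin> Bad" by blast
  obtain S where S: "homogeneous 3 {..<n} (EG n G) S" "card S = hom_number 3 {..<n} (EG n G)"
    using hom_attained by blast
  have "\<not> K \<le> card S"
  proof
    assume "K \<le> card S"
    hence "G \<in> Bad" using G(1) S(1) unfolding Bad_def by blast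
    thus False using G(2) by contradiction
  qed
  hence "hom_number 3 {..<n} (EG n G) \<le> 2*L+5" using S(2) K_def by simp
  thus ?thesis using G(1) A_def by blast
qed




lemma hset_finite:
  "finite {hom_number 3 {..<n} E | E. uniform_hypergraph 3 {..<n} E \<and> Q_free 3 {..<(n::nat)} E Q}"
proof -
  have "{hom_number 3 {..<n} E | E. uniform_hypergraph 3 {..<n} E \<and> Q_free 3 {..<n} E Q}
        \<subseteq> (hom_number 3 {..<n}) ` Pow (Pow {..<n})"
    by (auto simp: uniform_hypergraph_def)
  thus ?thesis by (rule finite_subset) simp
qed

lemma lower_h:
  fixes n k :: nat assumes "1 \<le> n" "4^k \<le> n - 1"
  shows "k+1 \<le> h_r 3 n {(4,1),(4,3)}"
proof -
  have "{} \<in> {E. uniform_hypergraph 3 {..<n} E \<and> Q_free 3 {..<n} E {(4,1),(4,3)}}"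
    by (auto simp: uniform_hypergraph_def Q_free_def has_induced_def)
  hence ne: "{hom_number 3 {..<n} E | E. uniform_hypergraph 3 {..<n} E \<and> Q_free 3 {..<n} E {(4,1),(4,3)}} \<noteq> {}"
    by blast
  have "h_r 3 n {(4,1),(4,3)} \<in> {hom_number 3 {..<n} E | E. uniform_hypergraph 3 {..<n} E \<and> Q_free 3 {..<n} E {(4,1),(4,3)}}"
    unfolding h_r_def using hset_finite ne by (rule Min_in)
  then obtain E where E: "h_r 3 n {(4,1),(4,3)} = hom_number 3 {..<n} E"
    "uniform_hypergraph 3 {..<n} E" "Q_free 3 {..<n} E {(4,1),(4,3)}" by blast
  show ?thesis unfolding E(1) by (rule lower[OF E(2,3) assms])
qed

lemma upper_h:
  fixes n L :: nat assumes "n \<le> 2^L"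
  shows "h_r 3 n {(4,1),(4,3)} \<le> 2*L+5"
proof -
  obtain G where G: "G \<subseteq> r_subsets 2 {..<n}" "hom_number 3 {..<n} (EG n G) \<le> 2*L+5"
    using upper_graph[OF assms] by blast
  have u: "\<forall>p\<in>G. card p = 2" using G(1) by (auto simp: r_subsets_def)
  have "hom_number 3 {..<n} (EG n G) \<in> {hom_number 3 {..<n} E | E. uniform_hypergraph 3 {..<n} E \<and> Q_free 3 {..<n} E {(4,1),(4,3)}}"
    using EG_uniform EG_Qfree[OF u] by blast
  hence "h_r 3 n {(4,1),(4,3)} \<le> hom_number 3 {..<n} (EG n G)"
    unfolding h_r_def using hset_finite by (rule Min_le[rotated])
  thus ?thesis using G(2) by linarith
qed

theorem mainTheorem7:
  shows "\<forall>\<^sub>F n in sequentially.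
           (1/2) * log 2 (real n) \<le> real (h_r 3 n {(4,1),(4,3)}) \<and>
           real (h_r 3 n {(4,1),(4,3)}) < 4 * (log 2 (real n))^2"
  unfolding eventually_sequentially
proof (intro exI[of _ 4] allI impI)
  fix n :: nat assume n4: "4 \<le> n"
  define x where "x = log 2 (real n)"
  have npos: "real n > 0" using n4 by simp
  have x2: "x \<ge> 2"
  proof -
    have "log 2 4 \<le> log 2 (real n)" using n4 by (subst log_le_cancel_iff) auto
    moreover have "log 2 (4::real) = 2"
    proof -
      have "log 2 (4::real) = log 2 (2^2)" by simp
      also have "\<dots> = 2" using log_pow_cancel[of "2::real" 2] by simp
      finally show ?thesis .
    qed
    ultimately show ?thesis unfolding x_def by simp
  qed
  have pw: "2 powr x = real n" unfolding x_def using npos by simp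
  define k where "k = nat (\<lceil>x/2\<rceil> - 1)"
  have c1: "\<lceil>x/2\<rceil> \<ge> 1" using x2 by linarith
  have kr: "real k = real_of_int \<lceil>x/2\<rceil> - 1" unfolding k_def using c1 by simp
  have "real k < x/2" unfolding kr by linarith
  hence "2 powr (2 * real k) < 2 powr x" by simp
  moreover have "real (4^k) = 2 powr (2 * real k)"
  proof -
    have "real (4^k) = (2::real)^(2*k)" by (simp add: power_mult)
    also have "\<dots> = 2 powr (real (2*k))" by (rule powr_realpow[symmetric]) simp
    finally show ?thesis by simp
  qed
  ultimately have "real (4^k) < real n" using pw by simp
  hence "4^k \<le> n - 1" by linarith
  hence lo: "k+1 \<le> h_r 3 n {(4,1),(4,3)}" using lower_h n4 by simp
  have "(1/2) * x \<le> real (k+1)" using kr by linarith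
  hence lower: "(1/2) * x \<le> real (h_r 3 n {(4,1),(4,3)})" using lo by linarith
  define L where "L = nat \<lceil>x\<rceil>"
  have Lr: "real L = real_of_int \<lceil>x\<rceil>" unfolding L_def using x2 by simp
  have "real n \<le> 2 powr (real L)" unfolding pw[symmetric] Lr by simp
  hence "real n \<le> real (2^L)" by (simp add: powr_realpow)
  hence "n \<le> 2^L" by linarith
  hence up: "h_r 3 n {(4,1),(4,3)} \<le> 2*L+5" by (rule upper_h)
  have "real L < x + 1" unfolding Lr by linarith
  moreover have "x * x \<ge> 2 * x" using x2 by (simp add: mult_right_mono)
  moreover have "real (2*L+5) = 2*real L+5" by simp
  ultimately have "real (2*L+5) < 4 * x^2" unfolding power2_eq_square using x2 by linarith
  hence upper: "real (h_r 3 n {(4,1),(4,3)}) < 4 * x^2" using up by linarith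
  show "(1/2) * log 2 (real n) \<le> real (h_r 3 n {(4,1),(4,3)}) \<and>
           real (h_r 3 n {(4,1),(4,3)}) < 4 * (log 2 (real n))^2"
    using lower upper unfolding x_def by simp
qed


end
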